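(* Let $\widehat{\mathcal{A}}$ be the algebra of formal power series in variables $a,b$ satisfying $ab-ba=b^2$. The $\mathbb{C}$-vector space $$\tilde{\mathcal{A}}_{conv.}:=\Big\{\sum_{p,q}\gamma_{p,q}a^pb^q\ :\ \exists R>1,\ \exists C_R\ \text{such that}\ |\gamma_{p,q}|\le C_RR^{p+q}q!\ \ \forall p,q\Big\}$$ is a subalgebra of $\widehat{\mathcal{A}}$. Moreover $$\tilde{\mathcal{A}}_{conv.}=\Big\{\sum_{p,q}\delta_{p,q}b^qa^p\ :\ \exists R>1,\ \exists D_R\ \text{such that}\ |\delta_{p,q}|\le D_RR^{p+q}q!\ \ \forall p,q\Big\}.$$
   Context: $\mathcal{A}_0$ denotes the $\mathbb{C}$-algebra of polynomials in $a,b$ subject to $ab-ba=b^2$. $\widehat{\mathcal{A}}$ is its completion for the $(a,b)$-adic topology, i.e. the algebra of formal series whose elements can be uniquely written $\sum_{p,q\ge0}\gamma_{p,q}a^pb^q$ and also uniquely $\sum_{p,q\ge0}\delta_{p,q}b^qa^p$, with product extending that of $\mathcal{A}_0$ continuously for the $(a,b)$-adic topology. *)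

theory Defs
  imports Complex_Main
begin

text \<open>
  Concrete model of the completed algebra: an element of the completion is
  identified with its (unique) family of normal-ordered coefficients
  gamma p q, standing for the formal series  sum gamma p q a^p b^q.  The product is the continuous
  extension of the product of A_0, computed with the commutation rule
  b^q a^r = sum_k binom r k (-1)^k q(q+1)...(q+k-1) a^(r-k) b^(q+k),
  which follows from  f(b) a = a f(b) - b^2 f'(b)  (i.e. from ab - ba = b^2).
\<close>

type_synonym ser = "nat \<Rightarrow> nat \<Rightarrow> complex"

definition ser_zero :: ser where "ser_zero = (\<lambda>p q. 0)"

definition ser_one :: ser where "ser_one = (\<lambda>p q. if p = 0 \<and> q = 0 then 1 else 0)"

definition ser_add :: "ser \<Rightarrow> ser \<Rightarrow> ser" where
  "ser_add x y = (\<lambda>p q. x p q + y p q)"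

definition ser_smult :: "complex \<Rightarrow> ser \<Rightarrow> ser" where
  "ser_smult c x = (\<lambda>p q. c * x p q)"

text \<open>Product: coefficient of a^m b^n in (sum x p q a^p b^q)(sum y r s a^r b^s),
  collecting the term a^p (b^q a^r) b^s with r = m - p + k, s = n - k - q.\<close>
definition ser_mult :: "ser \<Rightarrow> ser \<Rightarrow> ser" where
  "ser_mult x y = (\<lambda>m n. \<Sum>p\<le>m. \<Sum>k\<le>n. \<Sum>q\<le>n - k.
      x p q * y (m - p + k) (n - k - q) * of_nat ((m - p + k) choose k)
        * (-1) ^ k * pochhammer (of_nat q) k)"

text \<open>Conversion from anti-normal ordered coefficients delta (series
  sum delta p q b^q a^p) to normal ordered coefficients, using the same rule
  b^q a^p = sum_k binom p k (-1)^k q(q+1)...(q+k-1) a^(p-k) b^(q+k).\<close>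
definition anti_to_normal :: "ser \<Rightarrow> ser" where
  "anti_to_normal d = (\<lambda>i j. \<Sum>k\<le>j.
      d (i + k) (j - k) * of_nat ((i + k) choose k) * (-1) ^ k
        * pochhammer (of_nat (j - k)) k)"

definition conv_bounded :: "ser \<Rightarrow> bool" where
  "conv_bounded c \<longleftrightarrow>
     (\<exists>R::real. R > 1 \<and> (\<exists>C::real. \<forall>p q. norm (c p q) \<le> C * R ^ (p + q) * fact q))"

definition A_conv :: "ser set" where
  "A_conv = {g. conv_bounded g}"

end

theory Submission
  imports Defs
begin

definition transf :: "(nat \<Rightarrow> complex) \<Rightarrow> ser \<Rightarrow> ser" where
  "transf s d = (\<lambda>i j. \<Sum>k\<le>j. d (i + k) (j - k) * of_nat ((i + k) choose k) * s k
        * pochhammer (of_nat (j - k)) k)"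

lemma anti_eq: "anti_to_normal = transf (\<lambda>k. (-1)^k)"
  by (simp add: anti_to_normal_def transf_def fun_eq_iff)

lemma poch_fact: "fact n * pochhammer n k \<le> (fact (n + k) :: nat)"
proof (induction k)
  case 0
  then show ?case by simp
next
  case (Suc k)
  have "fact n * pochhammer n (Suc k) = (fact n * pochhammer n k) * (n + k)"
    by (simp add: pochhammer_Suc)
  also have "\<dots> \<le> fact (n + k) * (n + k)" using Suc by simp
  also have "\<dots> \<le> fact (n + Suc k)" by simp
  finally show ?case .
qed

lemma fact_add_le: "a + b \<le> n \<Longrightarrow> fact a * fact b \<le> (fact n :: nat)"
proof -
  assume h: "a + b \<le> n"
  have "fact a * fact b \<le> (fact (a + b) :: nat)"
    by (rule dvd_imp_le[OF fact_fact_dvd_fact]) simp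
  also have "\<dots> \<le> fact n" using h by (rule fact_mono_nat)
  finally show ?thesis .
qed

lemma norm_poch: "norm (pochhammer (of_nat q) k :: complex) = real (pochhammer q k)"
  by (simp only: pochhammer_of_nat norm_of_nat)

lemma cbE:
  assumes "conv_bounded c"
  obtains R C where "R \<ge> 1" "C \<ge> 0" "\<And>p q. norm (c p q) \<le> C * R^(p+q) * fact q"
proof -
  from assms obtain R C where R: "R > 1" and b: "\<And>p q. norm (c p q) \<le> C * R^(p+q) * fact q"
    unfolding conv_bounded_def by blast
  have "norm (c 0 0) \<le> C" using b[of 0 0] by simp
  then have "0 \<le> C" using norm_ge_zero[of "c 0 0"] by linarith
  then show ?thesis using that[of R C] R b by simp
qed

lemma cbI: "R > 1 \<Longrightarrow> (\<And>p q. norm (c p q) \<le> C * R^(p+q) * fact q) \<Longrightarrow> conv_bounded c"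
  unfolding conv_bounded_def by blast

lemma four_pow: "(4::real)^n = 2^n * 2^n"
  by (simp flip: power_mult_distrib)

lemma eight_pow: "(8::real)^n = 2^n * (2^n * 2^n)"
  by (simp flip: power_mult_distrib)

lemma transf_bound:
  assumes d: "\<And>p q. norm (d p q) \<le> C * R^(p+q) * fact q" and R: "R \<ge> 1" and C: "C \<ge> 0"
    and s: "\<And>k. norm (s k) \<le> 1"
  shows "norm (transf s d i j) \<le> C * (4*R)^(i+j) * fact j"
proof -
  have t: "norm (d (i+k) (j-k) * of_nat ((i+k) choose k) * s k * pochhammer (of_nat (j-k)) k)
      \<le> C * (2*R)^(i+j) * fact j" if k: "k \<le> j" for k
  proof -
    have e: "i + k + (j - k) = i + j" using k by simp
    have "norm (d (i+k) (j-k) * of_nat ((i+k) choose k) * s k * pochhammer (of_nat (j-k)) k)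
        \<le> (C * R^(i+j) * fact (j-k)) * real ((i+k) choose k) * 1 * real (pochhammer (j-k) k)"
      unfolding norm_mult norm_poch norm_of_nat
      using d[of "i+k" "j-k"] s[of k] C R
      by (intro mult_mono) (auto simp: e)
    also have "\<dots> = C * R^(i+j) * (real (fact (j-k) * pochhammer (j-k) k) * real ((i+k) choose k))"
      by simp
    also have "\<dots> \<le> C * R^(i+j) * (real (fact j) * 2^(i+j))"
    proof -
      have a: "fact (j-k) * pochhammer (j-k) k \<le> (fact j :: nat)"
        using poch_fact[of "j-k" k] k by simp
      have "(i+k) choose k \<le> 2^(i+k)" by (rule binomial_le_pow2)
      also have "(2::nat)^(i+k) \<le> 2^(i+j)" using k by (intro power_increasing) auto
      finally have b: "real ((i+k) choose k) \<le> 2^(i+j)"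
        by (metis of_nat_le_iff of_nat_numeral of_nat_power)
      have a': "real (fact (j-k) * pochhammer (j-k) k) \<le> real (fact j)"
        using a by (simp only: of_nat_le_iff)
      have "real (fact (j-k) * pochhammer (j-k) k) * real ((i+k) choose k) \<le> real (fact j) * 2^(i+j)"
        by (intro mult_mono a' b) auto
      then show ?thesis using C R by (intro mult_left_mono) auto
    qed
    also have "\<dots> = C * (2*R)^(i+j) * fact j"
      by (simp add: power_mult_distrib)
    finally show ?thesis .
  qed
  have "norm (transf s d i j) \<le> (\<Sum>k\<le>j. C * (2*R)^(i+j) * fact j)"
    unfolding transf_def by (rule sum_norm_le) (use t in auto)
  also have "\<dots> = real (Suc j) * (C * (2*R)^(i+j) * fact j)" by simp
  also have "\<dots> \<le> 2^(i+j) * (C * (2*R)^(i+j) * fact j)"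
  proof (rule mult_right_mono)
    have "Suc j \<le> 2^j" by (simp add: Suc_leI)
    also have "(2::nat)^j \<le> 2^(i+j)" by (intro power_increasing) auto
    finally show "real (Suc j) \<le> 2^(i+j)"
      by (metis of_nat_le_iff of_nat_numeral of_nat_power)
    show "0 \<le> C * (2*R)^(i+j) * fact j" using C R by simp
  qed
  also have "\<dots> = C * (4*R)^(i+j) * fact j"
    by (simp add: power_mult_distrib four_pow)
  finally show ?thesis .
qed

lemma transf_cb:
  assumes "conv_bounded d" "\<And>k. norm (s k) \<le> 1"
  shows "conv_bounded (transf s d)"
proof -
  obtain R C where R: "R \<ge> 1" "C \<ge> 0" "\<And>p q. norm (d p q) \<le> C * R^(p+q) * fact q"
    using cbE[OF assms(1)] by blast
  show ?thesis
    apply (rule cbI[of "4*R" _ C])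
    using R(1) apply simp
    using transf_bound[where s=s, OF R(3) R(1) R(2) assms(2)] by blast
qed


lemma choose_id: "k \<le> t \<Longrightarrow> ((i + t) choose (t - k)) * ((i + k) choose k) = ((i + t) choose t) * (t choose k)"
proof -
  assume kt: "k \<le> t"
  have "((i + t) choose t) * (t choose k) = ((i+t) choose k) * ((i+t-k) choose (t-k))"
    using kt by (intro choose_mult) auto
  also have "(i+t-k) choose (t-k) = (i+t-k) choose i"
    using kt by (metis Nat.add_diff_assoc add_diff_cancel_left' binomial_symmetric le_add1)
  also have "((i+t) choose k) * ((i+t-k) choose i) = ((i+t) choose (i+k)) * ((i+k) choose k)"
    using choose_mult_lemma[of i "t-k" k] kt by (simp add: ac_simps)
  also have "(i+t) choose (i+k) = (i+t) choose (t-k)"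
    using kt by (metis Nat.diff_cancel add_left_mono binomial_symmetric)
  finally show ?thesis by simp
qed

lemma poch_id:
  assumes "k \<le> t" "t \<le> j"
  shows "pochhammer (of_nat (j - t)) (t - k) * pochhammer (of_nat (j - k)) k
      = (pochhammer (of_nat (j - t)) t :: complex)"
proof -
  have "(pochhammer (of_nat (j - t)) t :: complex) = pochhammer (of_nat (j - t)) (t - k)
      * pochhammer (of_nat (j - t) + of_nat (t - k)) (t - (t - k))"
    by (rule pochhammer_product) simp
  moreover have "(of_nat (j - t) + of_nat (t - k) :: complex) = of_nat (j - k)"
    using assms by (simp flip: of_nat_add)
  moreover have "t - (t - k) = k" using assms by simp
  ultimately show ?thesis by simp
qed

lemma inv_id: "transf (\<lambda>k. (-1)^k) (transf (\<lambda>k. 1) g) = g"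
proof (intro ext)
  fix i j
  define F where "F k l = g (i+k+l) (j-(k+l)) * (of_nat ((i+k+l) choose l) * of_nat ((i+k) choose k))
     * (-1)^k * (pochhammer (of_nat (j-(k+l))) l * pochhammer (of_nat (j-k)) k)" for k l
  have "transf (\<lambda>k. (-1)^k) (transf (\<lambda>k. 1) g) i j = (\<Sum>k\<le>j. \<Sum>l\<le>j-k. F k l)"
    unfolding transf_def
    apply (intro sum.cong refl)
    apply (simp only: sum_distrib_right)
    apply (intro sum.cong refl)
    apply (simp only: F_def diff_diff_left add.assoc mult_1_right)
    apply (simp only: mult_ac)
    done
  also have "\<dots> = (\<Sum>(k,l)\<in>Sigma {..j} (\<lambda>k. {..j-k}). F k l)"
    by (rule sum.Sigma) auto
  also have "Sigma {..j} (\<lambda>k. {..j-k}) = {(k,l). k + l \<le> j}" by auto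
  also have "(\<Sum>(k,l)\<in>{(k,l). k + l \<le> j}. F k l) = (\<Sum>t\<le>j. \<Sum>k\<le>t. F k (t - k))"
    by (rule sum.triangle_reindex_eq)
  also have "\<dots> = (\<Sum>t\<le>j. g (i+t) (j-t) * of_nat ((i+t) choose t) * pochhammer (of_nat (j-t)) t
      * (\<Sum>k\<le>t. (-1)^k * of_nat (t choose k)))"
  proof (intro sum.cong refl)
    fix t assume t: "t \<in> {..j}"
    have "F k (t - k) = g (i+t) (j-t) * of_nat ((i+t) choose t) * pochhammer (of_nat (j-t)) t
      * ((-1)^k * of_nat (t choose k))" if k: "k \<le> t" for k
    proof -
      have c: "(of_nat ((i+t) choose (t-k)) * of_nat ((i+k) choose k) :: complex)
          = of_nat ((i+t) choose t) * of_nat (t choose k)"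
        using choose_id[OF k, of i] by (metis of_nat_mult)
      have p: "pochhammer (of_nat (j-t)) (t - k) * pochhammer (of_nat (j - k)) k
          = (pochhammer (of_nat (j - t)) t :: complex)"
        using poch_id[OF k] t by simp
      have e1: "i + k + (t - k) = i + t" "k + (t - k) = t" using k by auto
      show ?thesis unfolding F_def e1 c p by (simp add: algebra_simps)
    qed
    then show "(\<Sum>k\<le>t. F k (t - k)) = g (i+t) (j-t) * of_nat ((i+t) choose t) * pochhammer (of_nat (j-t)) t
      * (\<Sum>k\<le>t. (-1)^k * of_nat (t choose k))"
      by (simp add: sum_distrib_left)
  qed
  also have "\<dots> = (\<Sum>t\<in>{0}. g (i+t) (j-t) * of_nat ((i+t) choose t) * pochhammer (of_nat (j-t)) t
      * (\<Sum>k\<le>t. (-1)^k * of_nat (t choose k)))"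
    by (rule sum.mono_neutral_right) (auto simp: choose_alternating_sum)
  also have "\<dots> = g i j" by simp
  finally show "transf (\<lambda>k. (-1)^k) (transf (\<lambda>k. 1) g) i j = g i j" .
qed


lemma cb_mono:
  assumes "\<And>p q. norm (c p q) \<le> C * R1^(p+q) * fact q" "C \<ge> 0" "R1 \<ge> 1" "R1 \<le> R"
  shows "norm (c p q) \<le> C * R^(p+q) * fact q"
proof -
  have "R1^(p+q) \<le> R^(p+q)" using assms by (intro power_mono) auto
  then have "C * R1^(p+q) * fact q \<le> C * R^(p+q) * fact q"
    using assms by (intro mult_right_mono mult_left_mono) auto
  then show ?thesis using assms(1)[of p q] by linarith
qed

lemma mult_term_nat:
  assumes "q + k \<le> n"
  shows "fact q * pochhammer q k * fact (n - k - q) \<le> (fact n :: nat)"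
proof -
  have "fact q * pochhammer q k * fact (n - k - q) \<le> fact (q + k) * fact (n - k - q)"
    using poch_fact[of q k] by simp
  also have "\<dots> \<le> fact n" using assms by (intro fact_add_le) simp
  finally show ?thesis .
qed

lemma mult_closed:
  assumes "conv_bounded x" "conv_bounded y"
  shows "conv_bounded (ser_mult x y)"
proof -
  obtain R1 C1 where R1: "R1 \<ge> 1" "C1 \<ge> 0" "\<And>p q. norm (x p q) \<le> C1 * R1^(p+q) * fact q"
    using cbE[OF assms(1)] by blast
  obtain R2 C2 where R2: "R2 \<ge> 1" "C2 \<ge> 0" "\<And>p q. norm (y p q) \<le> C2 * R2^(p+q) * fact q"
    using cbE[OF assms(2)] by blast
  define R where "R = max R1 R2"
  have R: "R \<ge> 1" unfolding R_def using R1 by auto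
  have hx: "norm (x p q) \<le> C1 * R^(p+q) * fact q" for p q
    by (rule cb_mono[OF R1(3) R1(2) R1(1)]) (simp add: R_def)
  have hy: "norm (y p q) \<le> C2 * R^(p+q) * fact q" for p q
    by (rule cb_mono[OF R2(3) R2(2) R2(1)]) (simp add: R_def)
  define B where "B m n = C1 * C2 * (2*R)^(m+n) * fact n" for m n :: nat
  have B0: "B m n \<ge> 0" for m n unfolding B_def using R1 R2 R by simp
  have tbound: "norm (x p q * y (m - p + k) (n - k - q) * of_nat ((m - p + k) choose k)
        * (-1) ^ k * pochhammer (of_nat q) k) \<le> B m n"
    if h: "p \<le> m" "k \<le> n" "q \<le> n - k" for m n p k q
  proof -
    have e: "p + q + (m - p + k + (n - (k + q))) = m + n" using h by simp
    have "norm (x p q * y (m - p + k) (n - k - q) * of_nat ((m - p + k) choose k)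
        * (-1) ^ k * pochhammer (of_nat q) k)
        = norm (x p q) * norm (y (m - p + k) (n - k - q)) * real ((m - p + k) choose k)
          * real (pochhammer q k)"
      unfolding norm_mult norm_poch norm_of_nat by (simp add: norm_power)
    also have "\<dots> \<le> (C1 * R^(p+q) * fact q) * (C2 * R^(m - p + k + (n - k - q)) * fact (n - k - q))
          * real ((m - p + k) choose k) * real (pochhammer q k)"
      using hx[of p q] hy[of "m - p + k" "n - k - q"] R1 R2 R
      by (intro mult_mono) auto
    also have "\<dots> = C1 * C2 * R^(m+n) * (real (fact q * pochhammer q k * fact (n - k - q))
          * real ((m - p + k) choose k))"
      by (simp add: e flip: power_add)
    also have "\<dots> \<le> C1 * C2 * R^(m+n) * (real (fact n) * 2^(m+n))"
    proof -
      have a: "real (fact q * pochhammer q k * fact (n - k - q)) \<le> real (fact n)"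
        using mult_term_nat[of q k n] h by (simp only: of_nat_le_iff)
      have "(m - p + k) choose k \<le> 2^(m - p + k)" by (rule binomial_le_pow2)
      also have "(2::nat)^(m - p + k) \<le> 2^(m+n)" using h by (intro power_increasing) auto
      finally have b: "real ((m - p + k) choose k) \<le> 2^(m+n)"
        by (metis of_nat_le_iff of_nat_numeral of_nat_power)
      have "real (fact q * pochhammer q k * fact (n - k - q)) * real ((m - p + k) choose k)
          \<le> real (fact n) * 2^(m+n)"
        by (intro mult_mono a b) auto
      then show ?thesis using R1 R2 R by (intro mult_left_mono) auto
    qed
    also have "\<dots> = B m n" unfolding B_def by (simp add: power_mult_distrib)
    finally show ?thesis .
  qed
  have main: "norm (ser_mult x y m n) \<le> C1 * C2 * (8*R)^(m+n) * fact n" for m n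
  proof -
    let ?t = "\<lambda>p k q. x p q * y (m - p + k) (n - k - q) * of_nat ((m - p + k) choose k)
        * (-1) ^ k * pochhammer (of_nat q) k"
    have "norm (ser_mult x y m n) \<le> (\<Sum>p\<le>m. norm (\<Sum>k\<le>n. \<Sum>q\<le>n - k. ?t p k q))"
      unfolding ser_mult_def by (rule norm_sum)
    also have "\<dots> \<le> (\<Sum>p\<le>m. \<Sum>k\<le>n. norm (\<Sum>q\<le>n - k. ?t p k q))"
      by (intro sum_mono norm_sum)
    also have "\<dots> \<le> (\<Sum>p\<le>m. \<Sum>k\<le>n. \<Sum>q\<le>n - k. norm (?t p k q))"
      by (intro sum_mono norm_sum)
    also have "\<dots> \<le> (\<Sum>p\<le>m. \<Sum>k\<le>n. \<Sum>q\<le>n - k. B m n)"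
      by (intro sum_mono tbound) auto
    also have "\<dots> \<le> (\<Sum>p\<le>m. \<Sum>k\<le>n. \<Sum>q\<le>n. B m n)"
      by (intro sum_mono sum_mono2) (auto simp: B0)
    also have "\<dots> = real (Suc m) * real (Suc n) * real (Suc n) * B m n" by simp
    also have "\<dots> \<le> 2^m * 2^n * 2^n * B m n"
    proof -
      have "real (Suc m) \<le> 2^m" "real (Suc n) \<le> 2^n"
        by (metis Suc_leI less_exp of_nat_le_iff of_nat_numeral of_nat_power)+
      then show ?thesis using B0[of m n]
        by (intro mult_right_mono mult_mono) auto
    qed
    also have "\<dots> \<le> 4^(m+n) * B m n"
    proof (rule mult_right_mono[OF _ B0])
      have "(2::real)^m * 2^n * 2^n \<le> 2^(m+n) * 2^(m+n)"
        by (simp add: power_add)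
      then show "(2::real)^m * 2^n * 2^n \<le> 4^(m+n)" by (simp add: four_pow)
    qed
    also have "\<dots> = C1 * C2 * (8*R)^(m+n) * fact n"
      unfolding B_def by (simp add: power_mult_distrib four_pow eight_pow)
    finally show ?thesis .
  qed
  show ?thesis
    by (rule cbI[of "8*R" _ "C1 * C2"]) (use R main in auto)
qed

theorem proposition1p1p3:
  shows "ser_zero \<in> A_conv \<and> ser_one \<in> A_conv
    \<and> (\<forall>x\<in>A_conv. \<forall>y\<in>A_conv. ser_add x y \<in> A_conv)
    \<and> (\<forall>c. \<forall>x\<in>A_conv. ser_smult c x \<in> A_conv)
    \<and> (\<forall>x\<in>A_conv. \<forall>y\<in>A_conv. ser_mult x y \<in> A_conv)
    \<and> A_conv = anti_to_normal ` {d. conv_bounded d}"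
proof (intro conjI ballI allI)
  show "ser_zero \<in> A_conv"
    unfolding A_conv_def ser_zero_def by (auto intro!: cbI[of 2 _ 0])
  show "ser_one \<in> A_conv"
    unfolding A_conv_def ser_one_def by (auto intro!: cbI[of 2 _ 1])
  fix x y assume x: "x \<in> A_conv" and y: "y \<in> A_conv"
  obtain R1 C1 where R1: "R1 \<ge> 1" "C1 \<ge> 0" "\<And>p q. norm (x p q) \<le> C1 * R1^(p+q) * fact q"
    using cbE x unfolding A_conv_def by blast
  obtain R2 C2 where R2: "R2 \<ge> 1" "C2 \<ge> 0" "\<And>p q. norm (y p q) \<le> C2 * R2^(p+q) * fact q"
    using cbE y unfolding A_conv_def by blast
  define R where "R = max R1 R2"
  have hx: "norm (x p q) \<le> C1 * R^(p+q) * fact q" for p q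
    by (rule cb_mono[OF R1(3) R1(2) R1(1)]) (simp add: R_def)
  have hy: "norm (y p q) \<le> C2 * R^(p+q) * fact q" for p q
    by (rule cb_mono[OF R2(3) R2(2) R2(1)]) (simp add: R_def)
  show "ser_add x y \<in> A_conv"
    unfolding A_conv_def
  proof (intro CollectI cbI[of "R + 1" _ "C1 + C2"])
    show "R + 1 > 1" using R1 unfolding R_def by auto
    fix p q
    have "norm (ser_add x y p q) \<le> norm (x p q) + norm (y p q)"
      unfolding ser_add_def by (rule norm_triangle_ineq)
    also have "\<dots> \<le> C1 * R^(p+q) * fact q + C2 * R^(p+q) * fact q"
      using hx hy by (rule add_mono)
    also have "\<dots> = (C1 + C2) * R^(p+q) * fact q" by (simp add: algebra_simps)
    also have "\<dots> \<le> (C1 + C2) * (R+1)^(p+q) * fact q"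
      using R1 R2 unfolding R_def
      by (intro mult_right_mono mult_left_mono power_mono) auto
    finally show "norm (ser_add x y p q) \<le> (C1 + C2) * (R+1)^(p+q) * fact q" .
  qed
  show "ser_mult x y \<in> A_conv"
    using mult_closed x y unfolding A_conv_def by blast
next
  fix c x assume x: "x \<in> A_conv"
  obtain R1 C1 where R1: "R1 \<ge> 1" "C1 \<ge> 0" "\<And>p q. norm (x p q) \<le> C1 * R1^(p+q) * fact q"
    using cbE x unfolding A_conv_def by blast
  show "ser_smult c x \<in> A_conv"
    unfolding A_conv_def
  proof (intro CollectI cbI[of "R1 + 1" _ "norm c * C1"])
    show "R1 + 1 > 1" using R1 by auto
    fix p q
    have "norm (ser_smult c x p q) = norm c * norm (x p q)"
      unfolding ser_smult_def by (simp add: norm_mult)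
    also have "\<dots> \<le> norm c * (C1 * R1^(p+q) * fact q)"
      using R1(3) by (intro mult_left_mono) auto
    also have "\<dots> \<le> norm c * (C1 * (R1+1)^(p+q) * fact q)"
      using R1 by (intro mult_right_mono mult_left_mono power_mono) auto
    finally show "norm (ser_smult c x p q) \<le> norm c * C1 * (R1+1)^(p+q) * fact q"
      by (simp add: mult_ac)
  qed
next
  show "A_conv = anti_to_normal ` {d. conv_bounded d}"
  proof
    show "anti_to_normal ` {d. conv_bounded d} \<subseteq> A_conv"
      unfolding A_conv_def anti_eq
      by (auto intro!: transf_cb simp: norm_power)
    show "A_conv \<subseteq> anti_to_normal ` {d. conv_bounded d}"
    proof
      fix g assume g: "g \<in> A_conv"
      have "g = anti_to_normal (transf (\<lambda>k. 1) g)"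
        unfolding anti_eq inv_id ..
      moreover have "conv_bounded (transf (\<lambda>k. 1) g)"
        using g unfolding A_conv_def by (auto intro!: transf_cb)
      ultimately show "g \<in> anti_to_normal ` {d. conv_bounded d}" by blast
    qed
  qed
qed

end
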